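(* Let $\eta_1\le\eta_2$ be real numbers such that either both $\eta_1,\eta_2\in\mathbb R\setminus\mathbb Z$ or both $\eta_1,\eta_2\in\mathbb Z$. For every $f\in L^1[\eta_1,\eta_2]$ which is continuous in a neighborhood of the integers (in $[\eta_1,\eta_2]$), one has $$\lim_{n\to\infty}\sqrt{n\pi}\int_{\eta_1}^{\eta_2}\cos^{2n}(\pi x)\,f(x)\,dx=\sum_{m\in\mathbb Z,\ \eta_1\le m\le\eta_2}f(m)-\frac{f(\eta_1)\chi_{\mathbb Z}(\eta_1)+f(\eta_2)\chi_{\mathbb Z}(\eta_2)}{2},$$ where $\chi_{\mathbb Z}$ is the characteristic function of $\mathbb Z$.
   Context: $\cos^{2n}(y)$ denotes $(\cos y)^{2n}$; $n$ ranges over $\mathbb N$. *)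

theory Defs
  imports "HOL-Analysis.Analysis"
begin

end

theory Submission
  imports Defs "HOL-Real_Asymp.Real_Asymp"
begin


definition W :: "nat \<Rightarrow> real" where
  "W n = (1/2) * (\<Prod>k=1..n. (2*real k - 1) / (2*real k))"

lemma W_Suc: "W (Suc n) = W n * (2*real n + 1) / (2*real n + 2)"
  unfolding W_def by (simp add: field_simps)

lemma W_0: "W 0 = 1/2" by (simp add: W_def)

lemma W_nonneg: "W n \<ge> 0"
  unfolding W_def by (intro mult_nonneg_nonneg prod_nonneg) auto

lemma W_sq: "W n ^ 2 = 1 / (4 * (2 * real n + 1) * (\<Prod>k=1..n. (4*real k^2) / (4*real k^2 - 1)))"
proof (induction n)
  case 0 then show ?case by (simp add: W_def power2_eq_square)
next
  case (Suc n)
  have e: "4 * (real (Suc n))^2 - 1 = (2*real n + 1) * (2 * real n + 3)"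
    by (simp add: algebra_simps power2_eq_square)
  have pos: "(\<Prod>k=1..n. (4*real k^2) / (4*real k^2 - 1)) > 0"
  proof (intro prod_pos ballI)
    fix k assume "k \<in> {1..n}"
    then have "real k \<ge> 1" by auto
    then have "1 \<le> real k ^ 2" using one_le_power by blast
    then have "4*real k^2 - 1 > 0" by linarith
    then show "(4*real k^2) / (4*real k^2 - 1) > 0" using \<open>real k \<ge> 1\<close> by auto
  qed
  define p where "p = (\<Prod>k=1..n. (4*real k^2) / (4*real k^2 - 1))"
  have pS: "(\<Prod>k=1..Suc n. (4*real k^2) / (4*real k^2 - 1)) = p * (4 * (real n + 1)^2 / ((2*real n + 1) * (2 * real n + 3)))"
    unfolding p_def using e by simp
  have "W (Suc n) ^ 2 = W n ^ 2 * (2*real n + 1)^2 / (2*real n + 2)^2"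
    by (simp add: W_Suc power_mult_distrib power_divide)
  also have "\<dots> = 1 / (4 * (2 * real (Suc n) + 1) * (\<Prod>k=1..Suc n. (4*real k^2) / (4*real k^2 - 1)))"
    using pos unfolding Suc.IH pS p_def[symmetric]
    by (simp add: power2_eq_square divide_simps) (simp add: algebra_simps)
  finally show ?case .
qed

lemma W_lim: "(\<lambda>n. sqrt (real n * pi) * W n) \<longlonglongrightarrow> 1/2"
proof -
  let ?P = "\<lambda>n. \<Prod>k=1..n. (4*real k^2) / (4*real k^2 - 1)"
  have l1: "(\<lambda>n. real n / (2 * real n + 1)) \<longlonglongrightarrow> 1/2" by real_asymp
  have "(\<lambda>n. pi / 4 * (real n / (2 * real n + 1)) / ?P n) \<longlonglongrightarrow> pi / 4 * (1/2) / (pi/2)"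
    by (intro tendsto_intros l1 wallis) auto
  also have "pi / 4 * (1/2) / (pi/2) = 1/4" by simp
  also have "(\<lambda>n. pi / 4 * (real n / (2 * real n + 1)) / ?P n) = (\<lambda>n. (sqrt (real n * pi) * W n)^2)"
    by (rule ext) (simp add: power_mult_distrib W_sq)
  finally have "(\<lambda>n. sqrt ((sqrt (real n * pi) * W n)^2)) \<longlonglongrightarrow> sqrt (1/4)"
    by (rule tendsto_real_sqrt)
  moreover have "sqrt (1/4::real) = 1/2" by (simp add: real_sqrt_divide)
  ultimately show ?thesis using W_nonneg by (simp add: real_sqrt_mult)
qed



lemma cos_half_int: "m \<in> \<int> \<Longrightarrow> cos (pi * (m + 1/2)) = 0"
  by (elim Ints_cases) (simp add: distrib_left cos_add)

lemma sin_int: "m \<in> \<int> \<Longrightarrow> sin (pi * m) = 0"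
  by (elim Ints_cases) simp

lemma cos_pow_integrable: "(\<lambda>x. cos (pi * x) ^ k) integrable_on {a..b}"
  by (intro integrable_continuous_interval continuous_intros)

lemma cos_pow_recur:
  assumes "m \<in> \<int>"
  shows "(2 * real n + 2) * integral {m..m+1/2} (\<lambda>x. cos (pi * x) ^ (2 * Suc n))
       = (2 * real n + 1) * integral {m..m+1/2} (\<lambda>x. cos (pi * x) ^ (2 * n))"
proof -
  define F where "F x = sin (pi * x) * cos (pi * x) ^ (2*n+1) / pi" for x
  define F' where "F' x = (2 * real n + 2) * cos (pi * x) ^ (2 * Suc n) - (2 * real n + 1) * cos (pi * x) ^ (2 * n)" for x
  have d: "(F has_real_derivative F' x) (at x)" for x
  proof -
    have "(F has_real_derivative (cos (pi * x) * pi * cos (pi * x) ^ (2*n+1) + sin (pi * x) * (real (2*n+1) * cos (pi * x) ^ (2*n) * (- sin (pi * x) * pi))) / pi) (at x)"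
      unfolding F_def by (rule derivative_eq_intros refl | simp)+
    moreover have "(cos (pi * x) * pi * cos (pi * x) ^ (2*n+1) + sin (pi * x) * (real (2*n+1) * cos (pi * x) ^ (2*n) * (- sin (pi * x) * pi))) / pi = F' x"
    proof -
      have s: "sin (pi * x) * sin (pi * x) = 1 - cos (pi * x) ^ 2"
        using sin_cos_squared_add[of "pi * x"] by (simp add: power2_eq_square)
      have "(cos (pi * x) * pi * cos (pi * x) ^ (2*n+1) + sin (pi * x) * (real (2*n+1) * cos (pi * x) ^ (2*n) * (- sin (pi * x) * pi))) / pi
          = cos (pi * x) ^ (2*n+2) - real (2*n+1) * cos (pi * x) ^ (2*n) * (sin (pi * x) * sin (pi * x))"
        by (simp add: field_simps power_Suc)
      also have "\<dots> = F' x" unfolding s F'_def by (simp add: algebra_simps power_add power2_eq_square)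
      finally show ?thesis .
    qed
    ultimately show ?thesis by simp
  qed
  have "(F' has_integral (F (m + 1/2) - F m)) {m..m+1/2}"
    by (rule fundamental_theorem_of_calculus) (auto intro: has_real_derivative_iff_has_vector_derivative[THEN iffD1, OF has_field_derivative_at_within[OF d]])
  moreover have "F (m + 1/2) - F m = 0"
    unfolding F_def using cos_half_int[OF assms] sin_int[OF assms] by simp
  ultimately have "integral {m..m+1/2} F' = 0" by (simp add: integral_unique)
  moreover have "integral {m..m+1/2} F' = (2 * real n + 2) * integral {m..m+1/2} (\<lambda>x. cos (pi * x) ^ (2 * Suc n))
       - (2 * real n + 1) * integral {m..m+1/2} (\<lambda>x. cos (pi * x) ^ (2 * n))"
    unfolding F'_def by (simp add: integral_diff integrable_on_cmult_left cos_pow_integrable del: mult_Suc_right)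
  ultimately show ?thesis by simp
qed

lemma cos_pow_half: "m \<in> \<int> \<Longrightarrow> integral {m..m+1/2} (\<lambda>x. cos (pi * x) ^ (2 * n)) = W n"
proof (induction n)
  case 0 then show ?case by (simp add: W_0)
next
  case (Suc n)
  from cos_pow_recur[OF Suc.prems, of n] Suc.IH[OF Suc.prems]
  show ?case by (simp add: W_Suc field_simps del: mult_Suc_right)
qed



lemma abs_cos_shift_int: "\<bar>cos (pi * (y + of_int i))\<bar> = \<bar>cos (pi * y)\<bar>"
  by (simp add: distrib_left cos_add)

lemma cos_far:
  fixes x \<delta> :: real
  assumes "0 \<le> \<delta>" "\<delta> \<le> 1/2" "\<And>k. k \<in> \<int> \<Longrightarrow> \<delta> \<le> \<bar>x - k\<bar>"
  shows "\<bar>cos (pi * x)\<bar> \<le> cos (pi * \<delta>)"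
proof -
  define i where "i = round x"
  define y where "y = x - of_int i"
  have y1: "\<bar>y\<bar> \<le> 1/2" unfolding y_def i_def
    using of_int_round_ge[of x] of_int_round_le[of x] by linarith
  have y2: "\<delta> \<le> \<bar>y\<bar>" unfolding y_def using assms(3)[of "of_int i"] by simp
  have "\<bar>cos (pi * x)\<bar> = \<bar>cos (pi * y)\<bar>"
    using abs_cos_shift_int[of y i] by (simp add: y_def)
  also have "\<dots> = \<bar>cos (pi * \<bar>y\<bar>)\<bar>" by (metis abs_mult abs_of_nonneg cos_abs_real pi_ge_zero)
  also have "\<dots> = cos (pi * \<bar>y\<bar>)"
  proof -
    have a: "pi * \<bar>y\<bar> \<le> pi * (1/2)" using y1 by (intro mult_left_mono) auto
    have b: "0 \<le> pi * \<bar>y\<bar>" by simp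
    show ?thesis apply (rule abs_of_nonneg, rule cos_ge_zero) using a b pi_gt_zero by linarith+
  qed
  also have "\<dots> \<le> cos (pi * \<delta>)"
    using y1 y2 assms(1) by (intro cos_monotone_0_pi_le) auto
  finally show ?thesis .
qed

lemma cos_pow_far:
  fixes x \<delta> :: real
  assumes "0 \<le> \<delta>" "\<delta> \<le> 1/2" "\<And>k. k \<in> \<int> \<Longrightarrow> \<delta> \<le> \<bar>x - k\<bar>"
  shows "cos (pi * x) ^ (2*n) \<le> cos (pi * \<delta>) ^ (2*n)"
proof -
  have "cos (pi * x) ^ (2*n) = \<bar>cos (pi * x)\<bar> ^ (2*n)" by (simp add: power_even_abs)
  also have "\<dots> \<le> cos (pi * \<delta>) ^ (2*n)" by (intro power_mono cos_far assms) auto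
  finally show ?thesis .
qed

lemma sqrt_geom_lim:
  fixes c :: real
  assumes "\<bar>c\<bar> < 1"
  shows "(\<lambda>n. sqrt (real n * pi) * c ^ (2*n)) \<longlonglongrightarrow> 0"
proof (rule Lim_null_comparison)
  have "norm (c^2) < 1" using assms by (simp add: abs_square_less_1)
  from tendsto_mult_right_zero[OF powser_times_n_limit_0[OF this], of "sqrt pi"]
  show "(\<lambda>n. sqrt pi * (real n * (c^2)^n)) \<longlonglongrightarrow> 0" by simp
  show "\<forall>\<^sub>F n in sequentially. norm (sqrt (real n * pi) * c ^ (2*n)) \<le> sqrt pi * (real n * (c^2)^n)"
  proof (intro always_eventually allI)
    fix n
    have "sqrt (real n) \<le> real n"
    proof (cases "n = 0")
      case False
      then have "1 \<le> sqrt (real n)" by simp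
      then have "sqrt (real n) * 1 \<le> sqrt (real n) * sqrt (real n)" by (intro mult_left_mono) auto
      then show ?thesis by simp
    qed simp
    then have "sqrt (real n) * (c^2)^n \<le> real n * (c^2)^n" by (intro mult_right_mono) auto
    then show "norm (sqrt (real n * pi) * c ^ (2*n)) \<le> sqrt pi * (real n * (c^2)^n)"
      by (simp add: real_sqrt_mult power_mult abs_mult mult_left_mono)
  qed
qed



lemma int_lt_imp_le: "a \<in> \<int> \<Longrightarrow> b \<in> \<int> \<Longrightarrow> a < b \<Longrightarrow> a + 1 \<le> (b::real)"
  by (elim Ints_cases) (metis of_int_1 of_int_add of_int_le_iff of_int_less_iff zless_imp_add1_zle)

lemma far_from_ints:
  fixes m x t :: real
  assumes "m \<in> \<int>" "0 \<le> t" "t \<le> x - m" "x - m \<le> 1 - t"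
  shows "\<And>k. k \<in> \<int> \<Longrightarrow> t \<le> \<bar>x - k\<bar>"
proof -
  fix k :: real assume k: "k \<in> \<int>"
  show "t \<le> \<bar>x - k\<bar>"
  proof (cases "k \<le> m")
    case True then show ?thesis using assms by linarith
  next
    case False
    then have "m + 1 \<le> k" using int_lt_imp_le[OF assms(1) k] by simp
    then show ?thesis using assms by linarith
  qed
qed

lemma cos_lt1: "0 < t \<Longrightarrow> t \<le> 1/2 \<Longrightarrow> \<bar>cos (pi * t)\<bar> < 1"
proof -
  assume t: "0 < t" "t \<le> 1/2"
  have a: "pi * t \<le> pi * (1/2)" using t by (intro mult_left_mono) auto
  have b: "0 < pi * t" using t by simp
  have "0 \<le> cos (pi * t)" apply (rule cos_ge_zero) using a b pi_gt_zero by linarith+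
  moreover have "cos (pi * t) < cos 0" apply (rule cos_monotone_0_pi) using a b pi_gt_zero by linarith+
  ultimately show ?thesis by simp
qed

lemma cpow_integrable: "(\<lambda>x. cos (pi * x) ^ k * g x) integrable_on {a..b}" if "continuous_on {a..b} g"
  using that by (intro integrable_continuous_interval continuous_intros)

lemma kernel_right:
  assumes m: "m \<in> \<int>" and d: "0 < \<delta>" "\<delta> \<le> 1/2"
  shows "(\<lambda>n. sqrt (real n * pi) * integral {m..m+\<delta>} (\<lambda>x. cos (pi * x) ^ (2*n))) \<longlonglongrightarrow> 1/2"
proof -
  define c where "c = cos (pi * \<delta>)"
  define R where "R n = integral {m+\<delta>..m+1/2} (\<lambda>x. cos (pi * x) ^ (2*n))" for n
  have split: "integral {m..m+\<delta>} (\<lambda>x. cos (pi * x) ^ (2*n)) = W n - R n" for n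
    using Henstock_Kurzweil_Integration.integral_combine[where a=m and c="m+\<delta>" and b="m+1/2" and f="\<lambda>x. cos (pi * x) ^ (2*n)"] d cos_pow_half[OF m, of n]
      cos_pow_integrable unfolding R_def by simp
  have Rb: "\<bar>R n\<bar> \<le> 1/2 * c ^ (2*n)" for n
  proof -
    have "\<bar>R n\<bar> = norm (R n)" by simp
    also have "\<dots> \<le> integral {m+\<delta>..m+1/2} (\<lambda>x. c ^ (2*n))" unfolding R_def
    proof (rule integral_norm_bound_integral)
      show "(\<lambda>x. cos (pi * x) ^ (2*n)) integrable_on {m+\<delta>..m+1/2}" by (rule cos_pow_integrable)
      show "(\<lambda>x. c ^ (2*n)) integrable_on {m+\<delta>..m+1/2}" by (rule integrable_continuous_interval[OF continuous_on_const])
      fix x assume x: "x \<in> {m+\<delta>..m+1/2}"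
      have "cos (pi * x) ^ (2*n) \<le> c ^ (2*n)" unfolding c_def
        by (rule cos_pow_far) (use d x in \<open>auto intro!: far_from_ints[OF m]\<close>)
      then show "norm (cos (pi * x) ^ (2*n)) \<le> c ^ (2*n)" by (simp add: power_mult)
    qed
    also have "\<dots> = (1/2 - \<delta>) * c ^ (2*n)" using d by simp
    also have "\<dots> \<le> 1/2 * c ^ (2*n)" using d by (intro mult_right_mono) (auto simp: power_mult)
    finally show ?thesis .
  qed
  have "(\<lambda>n. sqrt (real n * pi) * R n) \<longlonglongrightarrow> 0"
  proof (rule Lim_null_comparison)
    show "(\<lambda>n. 1/2 * (sqrt (real n * pi) * c ^ (2*n))) \<longlonglongrightarrow> 0"
      using tendsto_mult_right_zero[OF sqrt_geom_lim[OF cos_lt1[OF d]], of "1/2"] unfolding c_def .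
    show "\<forall>\<^sub>F n in sequentially. norm (sqrt (real n * pi) * R n) \<le> 1/2 * (sqrt (real n * pi) * c ^ (2*n))"
    proof (intro always_eventually allI)
      fix n
      have "sqrt (real n * pi) * \<bar>R n\<bar> \<le> sqrt (real n * pi) * (1/2 * c ^ (2*n))"
        by (rule mult_left_mono[OF Rb]) simp
      then show "norm (sqrt (real n * pi) * R n) \<le> 1/2 * (sqrt (real n * pi) * c ^ (2*n))"
        by (simp add: abs_mult)
    qed
  qed
  from tendsto_diff[OF W_lim this] show ?thesis by (simp add: split right_diff_distrib)
qed

lemma right_lim:
  fixes f :: "real \<Rightarrow> real"
  assumes m: "m \<in> \<int>" and d: "0 < \<delta>" "\<delta> \<le> 1/2" and f: "continuous_on {m..m+\<delta>} f"
  shows "(\<lambda>n. sqrt (real n * pi) * integral {m..m+\<delta>} (\<lambda>x. cos (pi * x) ^ (2*n) * f x)) \<longlonglongrightarrow> f m / 2"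
proof -
  define g where "g x = f x - f m" for x
  have g: "continuous_on {m..m+\<delta>} g" unfolding g_def by (intro continuous_intros f)
  define E where "E n = integral {m..m+\<delta>} (\<lambda>x. cos (pi * x) ^ (2*n) * g x)" for n
  have dec: "integral {m..m+\<delta>} (\<lambda>x. cos (pi * x) ^ (2*n) * f x)
     = f m * integral {m..m+\<delta>} (\<lambda>x. cos (pi * x) ^ (2*n)) + E n" for n
  proof -
    have "(\<lambda>x. cos (pi * x) ^ (2*n) * f x) = (\<lambda>x. f m * cos (pi * x) ^ (2*n) + cos (pi * x) ^ (2*n) * g x)"
      by (auto simp: g_def algebra_simps)
    note eq = this
    show ?thesis
    proof -
      have i1: "(\<lambda>x. f m * cos (pi * x) ^ (2*n)) integrable_on {m..m+\<delta>}"
        by (rule integrable_on_mult_right[OF cos_pow_integrable])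
      have i2: "(\<lambda>x. cos (pi * x) ^ (2*n) * g x) integrable_on {m..m+\<delta>}"
        by (rule cpow_integrable[OF g])
      show ?thesis using integral_add[OF i1 i2] eq by (simp add: E_def)
    qed
  qed
  obtain B where B: "B \<ge> 0" "\<And>x. x \<in> {m..m+\<delta>} \<Longrightarrow> norm (g x) \<le> B"
    using continuous_on_compact_bound[OF compact_Icc g] by blast
  have E0: "(\<lambda>n. sqrt (real n * pi) * E n) \<longlonglongrightarrow> 0"
  proof (rule tendstoI)
    fix e :: real assume e: "e > 0"
    have "m \<in> {m..m+\<delta>}" using d by simp
    then obtain d1 where d1: "d1 > 0" "\<And>x. x \<in> {m..m+\<delta>} \<Longrightarrow> dist x m < d1 \<Longrightarrow> dist (g x) (g m) < e/4"
      using g e unfolding continuous_on_iff by (metis divide_pos_pos zero_less_numeral)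
    define t where "t = min (d1/2) \<delta>"
    have t: "0 < t" "t \<le> \<delta>" "t < d1" using d1 d by (auto simp: t_def)
    have gsmall: "\<bar>g x\<bar> \<le> e/4" if "x \<in> {m..m+t}" for x
      using d1(2)[of x] that t by (simp add: g_def dist_real_def)
    define c where "c = cos (pi * t)"
    have c: "\<bar>c\<bar> < 1" unfolding c_def using t d by (intro cos_lt1) auto
    have Esplit: "E n = integral {m..m+t} (\<lambda>x. cos (pi * x) ^ (2*n) * g x) + integral {m+t..m+\<delta>} (\<lambda>x. cos (pi * x) ^ (2*n) * g x)" for n
      unfolding E_def using t by (intro Henstock_Kurzweil_Integration.integral_combine[symmetric] cpow_integrable[OF g]) auto
    have gt: "continuous_on {m..m+t} g" by (rule continuous_on_subset[OF g]) (use t in auto)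
    have gt2: "continuous_on {m+t..m+\<delta>} g" by (rule continuous_on_subset[OF g]) (use t in auto)
    have E1: "\<bar>integral {m..m+t} (\<lambda>x. cos (pi * x) ^ (2*n) * g x)\<bar> \<le> e/4 * W n" for n
    proof -
      have "\<bar>integral {m..m+t} (\<lambda>x. cos (pi * x) ^ (2*n) * g x)\<bar> \<le> integral {m..m+t} (\<lambda>x. e/4 * cos (pi * x) ^ (2*n))"
        unfolding real_norm_def[symmetric]
      proof (rule integral_norm_bound_integral)
        show "(\<lambda>x. cos (pi * x) ^ (2*n) * g x) integrable_on {m..m+t}" by (rule cpow_integrable[OF gt])
        show "(\<lambda>x. e/4 * cos (pi * x) ^ (2*n)) integrable_on {m..m+t}"
          by (rule integrable_on_mult_right[OF cos_pow_integrable])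
        fix x assume "x \<in> {m..m+t}"
        then have "\<bar>g x\<bar> \<le> e/4" by (rule gsmall)
        moreover have "0 \<le> cos (pi * x) ^ (2*n)" by (simp add: power_mult)
        ultimately have "cos (pi * x) ^ (2*n) * \<bar>g x\<bar> \<le> cos (pi * x) ^ (2*n) * (e/4)"
          by (intro mult_left_mono)
        then show "norm (cos (pi * x) ^ (2*n) * g x) \<le> e/4 * cos (pi * x) ^ (2*n)"
          by (simp add: abs_mult power_mult mult.commute)
      qed
      also have "\<dots> = e/4 * integral {m..m+t} (\<lambda>x. cos (pi * x) ^ (2*n))" by simp
      also have "\<dots> \<le> e/4 * integral {m..m+1/2} (\<lambda>x. cos (pi * x) ^ (2*n))"
        using t d e by (intro mult_left_mono integral_subset_le cos_pow_integrable) (auto simp: power_mult)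
      also have "\<dots> = e/4 * W n" using cos_pow_half[OF m] by simp
      finally show ?thesis .
    qed
    have E2: "\<bar>integral {m+t..m+\<delta>} (\<lambda>x. cos (pi * x) ^ (2*n) * g x)\<bar> \<le> B * c ^ (2*n)" for n
    proof -
      have "\<bar>integral {m+t..m+\<delta>} (\<lambda>x. cos (pi * x) ^ (2*n) * g x)\<bar> \<le> integral {m+t..m+\<delta>} (\<lambda>x. B * c ^ (2*n))"
        unfolding real_norm_def[symmetric]
      proof (rule integral_norm_bound_integral)
        show "(\<lambda>x. cos (pi * x) ^ (2*n) * g x) integrable_on {m+t..m+\<delta>}" by (rule cpow_integrable[OF gt2])
        show "(\<lambda>x. B * c ^ (2*n)) integrable_on {m+t..m+\<delta>}" by (rule integrable_continuous_interval[OF continuous_on_const])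
        fix x assume x: "x \<in> {m+t..m+\<delta>}"
        then have "\<bar>g x\<bar> \<le> B" using B(2)[of x] t by auto
        moreover have "cos (pi * x) ^ (2*n) \<le> c ^ (2*n)" unfolding c_def
          by (rule cos_pow_far) (use d x t in \<open>auto intro!: far_from_ints[OF m]\<close>)
        moreover have "0 \<le> cos (pi * x) ^ (2*n)" by (simp add: power_mult)
        ultimately show "norm (cos (pi * x) ^ (2*n) * g x) \<le> B * c ^ (2*n)"
          by (simp add: abs_mult power_mult power_even_abs mult.commute mult_mono)
      qed
      also have "\<dots> = (\<delta> - t) * (B * c ^ (2*n))" using t by simp
      also have "\<dots> \<le> 1 * (B * c ^ (2*n))" using t d B by (intro mult_right_mono) (auto simp: power_mult)
      finally show ?thesis by simp
    qed
    have ev1: "\<forall>\<^sub>F n in sequentially. sqrt (real n * pi) * W n < 1"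
      using order_tendstoD(2)[OF W_lim, of 1] by simp
    have "(\<lambda>n. B * (sqrt (real n * pi) * c ^ (2*n))) \<longlonglongrightarrow> 0"
      by (rule tendsto_mult_right_zero[OF sqrt_geom_lim[OF c]])
    then have ev2: "\<forall>\<^sub>F n in sequentially. B * (sqrt (real n * pi) * c ^ (2*n)) < e/2"
      using order_tendstoD(2)[of _ 0 sequentially "e/2"] e by simp
    show "\<forall>\<^sub>F n in sequentially. dist (sqrt (real n * pi) * E n) 0 < e"
      using ev1 ev2
    proof eventually_elim
      case (elim n)
      have s: "sqrt (real n * pi) \<ge> 0" by simp
      have "\<bar>sqrt (real n * pi) * E n\<bar> \<le> sqrt (real n * pi) * (e/4 * W n + B * c ^ (2*n))"
      proof -
        have "\<bar>E n\<bar> \<le> e/4 * W n + B * c ^ (2*n)"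
          unfolding Esplit using E1[of n] E2[of n] abs_triangle_ineq by (smt (verit))
        then show ?thesis unfolding abs_mult using s by (simp add: mult_left_mono)
      qed
      also have "\<dots> = e/4 * (sqrt (real n * pi) * W n) + B * (sqrt (real n * pi) * c ^ (2*n))"
        by (simp add: algebra_simps)
      also have "\<dots> < e/4 * 1 + e/2"
        using elim e by (intro add_le_less_mono mult_left_mono) auto
      finally show ?case using e by simp
    qed
  qed
  have "(\<lambda>n. f m * (sqrt (real n * pi) * integral {m..m+\<delta>} (\<lambda>x. cos (pi * x) ^ (2*n))) + sqrt (real n * pi) * E n) \<longlonglongrightarrow> f m * (1/2) + 0"
    by (intro tendsto_intros kernel_right[OF m d] E0)
  then show ?thesis unfolding dec by (simp add: distrib_left mult.left_commute)
qed



lemma left_lim: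
  fixes f :: "real \<Rightarrow> real"
  assumes m: "m \<in> \<int>" and d: "0 < \<delta>" "\<delta> \<le> 1/2" and f: "continuous_on {m-\<delta>..m} f"
  shows "(\<lambda>n. sqrt (real n * pi) * integral {m-\<delta>..m} (\<lambda>x. cos (pi * x) ^ (2*n) * f x)) \<longlonglongrightarrow> f m / 2"
proof -
  have m': "-m \<in> \<int>" using m by simp
  have c: "continuous_on {-m..-m+\<delta>} (\<lambda>y. f (-y))"
    by (rule continuous_on_compose2[OF f]) (auto intro: continuous_intros)
  have eq: "integral {-m..-m+\<delta>} (\<lambda>y. cos (pi * y) ^ (2*n) * f (-y)) = integral {m-\<delta>..m} (\<lambda>x. cos (pi * x) ^ (2*n) * f x)" for n
  proof -
    have "integral {-m..-m+\<delta>} (\<lambda>y. cos (pi * y) ^ (2*n) * f (-y))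
        = integral {-m..-(m-\<delta>)} (\<lambda>y. (\<lambda>x. cos (pi * x) ^ (2*n) * f x) (-y))" by simp
    also have "\<dots> = integral {m-\<delta>..m} (\<lambda>x. cos (pi * x) ^ (2*n) * f x)"
      by (rule Henstock_Kurzweil_Integration.integral_reflect_real)
    finally show ?thesis .
  qed
  from right_lim[OF m' d c] show ?thesis unfolding eq by simp
qed

lemma nonint_dist:
  fixes \<eta> :: real
  assumes "\<eta> \<notin> \<int>"
  obtains d where "d > 0" "\<And>k. k \<in> \<int> \<Longrightarrow> d \<le> \<bar>\<eta> - k\<bar>"
proof -
  define d where "d = min (frac \<eta>) (1 - frac \<eta>)"
  have "d > 0" using assms frac_lt_1[of \<eta>] by (simp add: d_def)
  moreover have "d \<le> \<bar>\<eta> - k\<bar>" if k: "k \<in> \<int>" for k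
  proof -
    from k obtain j where j: "k = of_int j" by (elim Ints_cases)
    show ?thesis
    proof (cases "j \<le> floor \<eta>")
      case True
      then have "k \<le> of_int (floor \<eta>)" using j by simp
      then show ?thesis unfolding d_def frac_def by linarith
    next
      case False
      then have "k \<ge> of_int (floor \<eta>) + 1" using j by simp
      then show ?thesis unfolding d_def frac_def by linarith
    qed
  qed
  ultimately show ?thesis using that by blast
qed



theorem theorem1p2:
  fixes f :: "real \<Rightarrow> real" and \<eta>1 \<eta>2 :: real
  assumes "\<eta>1 \<le> \<eta>2"
    and "(\<eta>1 \<notin> \<int> \<and> \<eta>2 \<notin> \<int>) \<or> (\<eta>1 \<in> \<int> \<and> \<eta>2 \<in> \<int>)"
    and "f absolutely_integrable_on {\<eta>1..\<eta>2}"
    and "\<exists>U. open U \<and> (\<int> \<inter> {\<eta>1..\<eta>2}) \<subseteq> U \<and> continuous_on (U \<inter> {\<eta>1..\<eta>2}) f"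
  shows "(\<lambda>n::nat. sqrt (real n * pi) *
            integral {\<eta>1..\<eta>2} (\<lambda>x. (cos (pi * x)) ^ (2 * n) * f x))
         \<longlonglongrightarrow> (\<Sum>m\<in>{m::real. m \<in> \<int> \<and> \<eta>1 \<le> m \<and> m \<le> \<eta>2}. f m)
             - (f \<eta>1 * indicator \<int> \<eta>1 + f \<eta>2 * indicator \<int> \<eta>2) / 2"
proof -
  note le = assms(1)
  note cases = assms(2)
  define I where "I = {\<eta>1..\<eta>2}"
  obtain U where U: "open U" "\<int> \<inter> I \<subseteq> U" "continuous_on (U \<inter> I) f"
    using assms(4) unfolding I_def by blast
  define S where "S = {m::real. m \<in> \<int> \<and> \<eta>1 \<le> m \<and> m \<le> \<eta>2}"
  have finS: "finite S"
  proof (rule finite_subset)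
    show "S \<subseteq> of_int ` {\<lceil>\<eta>1\<rceil>..\<lfloor>\<eta>2\<rfloor>}"
    proof
      fix m assume "m \<in> S"
      then obtain j where j: "m = of_int j" "\<eta>1 \<le> of_int j" "of_int j \<le> \<eta>2" unfolding S_def by (auto elim: Ints_cases)
      then have "j \<in> {\<lceil>\<eta>1\<rceil>..\<lfloor>\<eta>2\<rfloor>}" by (simp add: ceiling_le le_floor_iff)
      then show "m \<in> of_int ` {\<lceil>\<eta>1\<rceil>..\<lfloor>\<eta>2\<rfloor>}" using j by blast
    qed
  qed simp
  have SZ: "m \<in> S \<Longrightarrow> m \<in> \<int>" for m unfolding S_def by simp
  have SI: "m \<in> S \<Longrightarrow> m \<in> I" for m unfolding S_def I_def by simp
  have ev: "\<forall>\<^sub>F d in at_right (0::real). d \<le> 1/4 \<and> (\<forall>m\<in>S. cball m d \<subseteq> U)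
      \<and> (\<eta>1 \<notin> \<int> \<longrightarrow> (\<forall>k\<in>\<int>. d < \<bar>\<eta>1 - k\<bar>)) \<and> (\<eta>2 \<notin> \<int> \<longrightarrow> (\<forall>k\<in>\<int>. d < \<bar>\<eta>2 - k\<bar>))"
  proof (intro eventually_conj)
    show "\<forall>\<^sub>F d in at_right (0::real). d \<le> 1/4"
      unfolding eventually_at_right_field by (intro exI[of _ "1/4"]) auto
    show "\<forall>\<^sub>F d in at_right (0::real). \<forall>m\<in>S. cball m d \<subseteq> U"
    proof (rule eventually_ball_finite[OF finS], rule ballI)
      fix m assume "m \<in> S"
      then have "m \<in> U" using U(2) SZ SI by blast
      then obtain e where e: "e > 0" "ball m e \<subseteq> U" using U(1) open_contains_ball by blast
      show "\<forall>\<^sub>F d in at_right (0::real). cball m d \<subseteq> U"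
        unfolding eventually_at_right_field
        by (rule exI[of _ e]) (use e in \<open>auto simp: subset_eq\<close>)
    qed
    show "\<forall>\<^sub>F d in at_right (0::real). \<eta>1 \<notin> \<int> \<longrightarrow> (\<forall>k\<in>\<int>. d < \<bar>\<eta>1 - k\<bar>)"
    proof (cases "\<eta>1 \<in> \<int>")
      case False
      then obtain e where e: "e > 0" "\<And>k. k \<in> \<int> \<Longrightarrow> e \<le> \<bar>\<eta>1 - k\<bar>" using nonint_dist[OF False] by blast
      show ?thesis unfolding eventually_at_right_field
        by (rule exI[of _ e]) (use e in \<open>fastforce\<close>)
    qed simp
    show "\<forall>\<^sub>F d in at_right (0::real). \<eta>2 \<notin> \<int> \<longrightarrow> (\<forall>k\<in>\<int>. d < \<bar>\<eta>2 - k\<bar>)"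
    proof (cases "\<eta>2 \<in> \<int>")
      case False
      then obtain e where e: "e > 0" "\<And>k. k \<in> \<int> \<Longrightarrow> e \<le> \<bar>\<eta>2 - k\<bar>" using nonint_dist[OF False] by blast
      show ?thesis unfolding eventually_at_right_field
        by (rule exI[of _ e]) (use e in \<open>fastforce\<close>)
    qed simp
  qed
  then obtain \<delta> where \<delta>: "\<delta> > 0" "\<delta> \<le> 1/4" "\<And>m. m \<in> S \<Longrightarrow> cball m \<delta> \<subseteq> U"
      "\<eta>1 \<notin> \<int> \<Longrightarrow> k \<in> \<int> \<Longrightarrow> \<delta> < \<bar>\<eta>1 - k\<bar>"  "\<eta>2 \<notin> \<int> \<Longrightarrow> k \<in> \<int> \<Longrightarrow> \<delta> < \<bar>\<eta>2 - k\<bar>" for k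
  proof -
    from ev[unfolded eventually_at_right_field] obtain b where b: "b > 0"
      "\<And>y. y > 0 \<Longrightarrow> y < b \<Longrightarrow> y \<le> 1/4 \<and> (\<forall>m\<in>S. cball m y \<subseteq> U)
      \<and> (\<eta>1 \<notin> \<int> \<longrightarrow> (\<forall>k\<in>\<int>. y < \<bar>\<eta>1 - k\<bar>)) \<and> (\<eta>2 \<notin> \<int> \<longrightarrow> (\<forall>k\<in>\<int>. y < \<bar>\<eta>2 - k\<bar>))"
      by blast
    from b(2)[of "b/2"] b(1) show ?thesis using that[of "b/2"] by auto
  qed
  have d2: "\<delta> \<le> 1/2" using \<delta>(2) by simp
  have lt1: "\<eta>1 + \<delta> \<le> m" if "m \<in> S" "m \<noteq> \<eta>1" for m
  proof (cases "\<eta>1 \<in> \<int>")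
    case True
    then have "\<eta>1 + 1 \<le> m" using that int_lt_imp_le[OF True SZ[OF that(1)]] unfolding S_def by auto
    then show ?thesis using \<delta>(2) by linarith
  next
    case False
    then show ?thesis using \<delta>(4)[OF False SZ[OF that(1)]] that(1) unfolding S_def by auto
  qed
  have gt2: "m + \<delta> \<le> \<eta>2" if "m \<in> S" "m \<noteq> \<eta>2" for m
  proof (cases "\<eta>2 \<in> \<int>")
    case True
    then have "m + 1 \<le> \<eta>2" using that int_lt_imp_le[OF SZ[OF that(1)] True] unfolding S_def by auto
    then show ?thesis using \<delta>(2) by linarith
  next
    case False
    then show ?thesis using \<delta>(5)[OF False SZ[OF that(1)]] that(1) unfolding S_def by auto
  qed
  define lo where "lo m = (if m = \<eta>1 then m else m - \<delta>)" for m
  define hi where "hi m = (if m = \<eta>2 then m else m + \<delta>)" for m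
  have CI: "{m-\<delta>..m+\<delta>} \<inter> I = {lo m..hi m}" if "m \<in> S" for m
    using lt1[OF that] gt2[OF that] that \<delta>(1) unfolding lo_def hi_def I_def S_def by auto
  have lohi: "lo m \<le> m" "m \<le> hi m" "{lo m..hi m} \<subseteq> I" "{lo m..hi m} \<subseteq> cball m \<delta>" if "m \<in> S" for m
    using lt1[OF that] gt2[OF that] that \<delta>(1) unfolding lo_def hi_def I_def S_def
    by (auto simp: dist_real_def)
  have contm: "continuous_on {lo m..hi m} f" if "m \<in> S" for m
    by (rule continuous_on_subset[OF U(3)]) (use lohi[OF that] \<delta>(3)[OF that] in blast)
  define h where "h n x = cos (pi * x) ^ (2*n) * f x" for n x
  have hfun: "h n = (\<lambda>x. cos (pi * x) ^ (2*n) * f x)" for n by (simp add: h_def fun_eq_iff)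
  have habs: "h n absolutely_integrable_on I" for n
    unfolding h_def
  proof (rule absolutely_integrable_bounded_measurable_product_real)
    show "(\<lambda>x. cos (pi * x) ^ (2*n)) \<in> borel_measurable (lebesgue_on I)"
      unfolding I_def by (intro continuous_imp_measurable_on_sets_lebesgue continuous_intros) auto
    show "I \<in> sets lebesgue" unfolding I_def by simp
    show "bounded ((\<lambda>x. cos (pi * x) ^ (2*n)) ` I)"
      unfolding bounded_iff by (rule exI[of _ 1]) (auto simp: power_abs intro!: power_le_one abs_cos_le_one)
    show "f absolutely_integrable_on I" using assms(3) unfolding I_def .
  qed
  have hint: "h n integrable_on I" for n using habs[of n] by (simp add: absolutely_integrable_on_def)
  have fabs: "(\<lambda>x. \<bar>f x\<bar>) integrable_on I" using assms(3) unfolding I_def absolutely_integrable_on_def by simp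
  define T where "T n m = integral {lo m..m} (h n) + integral {m..hi m} (h n)" for n m
  define Q where "Q n = integral I (\<lambda>x. h n x - (\<Sum>m\<in>S. if x \<in> {m-\<delta>..m+\<delta>} then h n x else 0))" for n
  have indint: "(\<lambda>x. if x \<in> {m-\<delta>..m+\<delta>} then h n x else 0) integrable_on I" if "m \<in> S" for m n
    unfolding integrable_restrict_Int CI[OF that] by (rule integrable_on_subinterval[OF hint lohi(3)[OF that]])
  have indval: "integral I (\<lambda>x. if x \<in> {m-\<delta>..m+\<delta>} then h n x else 0) = T n m" if "m \<in> S" for m n
  proof -
    have "integral I (\<lambda>x. if x \<in> {m-\<delta>..m+\<delta>} then h n x else 0) = integral {lo m..hi m} (h n)"
      unfolding integral_restrict_Int CI[OF that] ..
    also have "\<dots> = T n m" unfolding T_def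
      by (rule Henstock_Kurzweil_Integration.integral_combine[symmetric])
         (use lohi[OF that] in \<open>auto intro: integrable_on_subinterval[OF hint]\<close>)
    finally show ?thesis .
  qed
  have decomp: "integral I (h n) = (\<Sum>m\<in>S. T n m) + Q n" for n
  proof -
    have si: "(\<lambda>x. \<Sum>m\<in>S. if x \<in> {m-\<delta>..m+\<delta>} then h n x else 0) integrable_on I"
      by (rule integrable_sum[OF finS indint])
    have "Q n = integral I (h n) - integral I (\<lambda>x. \<Sum>m\<in>S. if x \<in> {m-\<delta>..m+\<delta>} then h n x else 0)"
      unfolding Q_def by (rule integral_diff[OF hint si])
    also have "integral I (\<lambda>x. \<Sum>m\<in>S. if x \<in> {m-\<delta>..m+\<delta>} then h n x else 0) = (\<Sum>m\<in>S. T n m)"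
    proof -
      have "integral I (\<lambda>x. \<Sum>m\<in>S. (\<lambda>m x. if x \<in> {m-\<delta>..m+\<delta>} then h n x else 0) m x)
           = (\<Sum>m\<in>S. integral I ((\<lambda>m x. if x \<in> {m-\<delta>..m+\<delta>} then h n x else 0) m))"
        by (rule integral_sum[OF finS]) (rule indint)
      then show ?thesis using indval by (auto intro: sum.cong)
    qed
    finally show ?thesis by simp
  qed
  define c where "c = cos (pi * \<delta>)"
  have cnn: "0 \<le> c ^ (2*n)" for n by (simp add: power_mult)
  have pw: "\<bar>h n x - (\<Sum>m\<in>S. if x \<in> {m-\<delta>..m+\<delta>} then h n x else 0)\<bar> \<le> c ^ (2*n) * \<bar>f x\<bar>" if x: "x \<in> I" for n x
  proof (cases "\<exists>m0\<in>S. x \<in> {m0-\<delta>..m0+\<delta>}")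
    case True
    then obtain m0 where m0: "m0 \<in> S" "x \<in> {m0-\<delta>..m0+\<delta>}" by blast
    have "(\<Sum>m\<in>S. if x \<in> {m-\<delta>..m+\<delta>} then h n x else 0) = (\<Sum>m\<in>S. if m = m0 then h n x else 0)"
    proof (rule sum.cong[OF refl])
      fix m assume m: "m \<in> S"
      have "x \<in> {m-\<delta>..m+\<delta>} \<longleftrightarrow> m = m0"
      proof
        assume xm: "x \<in> {m-\<delta>..m+\<delta>}"
        show "m = m0"
        proof (rule ccontr)
          assume "m \<noteq> m0"
          then have "m < m0 \<or> m0 < m" by auto
          then show False using int_lt_imp_le[OF SZ[OF m] SZ[OF m0(1)]] int_lt_imp_le[OF SZ[OF m0(1)] SZ[OF m]] xm m0(2) \<delta>(2) by auto
        qed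
      qed (use m0 in simp)
      then show "(if x \<in> {m-\<delta>..m+\<delta>} then h n x else 0) = (if m = m0 then h n x else 0)" by simp
    qed
    also have "\<dots> = h n x" using m0(1) finS by simp
    finally show ?thesis using cnn[of n] by simp
  next
    case False
    then have sum0: "(\<Sum>m\<in>S. if x \<in> {m-\<delta>..m+\<delta>} then h n x else 0) = 0" by (intro sum.neutral) auto
    have far: "\<delta> \<le> \<bar>x - k\<bar>" if k: "k \<in> \<int>" for k
    proof (cases "k \<in> S")
      case True then show ?thesis using False by auto
    next
      case False
      then have "k < \<eta>1 \<or> \<eta>2 < k" using k unfolding S_def by auto
      then show ?thesis
      proof
        assume kl: "k < \<eta>1"
        show ?thesis
        proof (cases "\<eta>1 \<in> \<int>")
          case True then have "k + 1 \<le> \<eta>1" using int_lt_imp_le[OF k True kl] by simp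
          then show ?thesis using x \<delta>(2) unfolding I_def by auto
        next
          case False then have "\<delta> < \<bar>\<eta>1 - k\<bar>" using \<delta>(4)[OF _ k] by blast
          then show ?thesis using x kl unfolding I_def by auto
        qed
      next
        assume kl: "\<eta>2 < k"
        show ?thesis
        proof (cases "\<eta>2 \<in> \<int>")
          case True then have "\<eta>2 + 1 \<le> k" using int_lt_imp_le[OF True k kl] by simp
          then show ?thesis using x \<delta>(2) unfolding I_def by auto
        next
          case False then have "\<delta> < \<bar>\<eta>2 - k\<bar>" using \<delta>(5)[OF _ k] by blast
          then show ?thesis using x kl unfolding I_def by auto
        qed
      qed
    qed
    have "cos (pi * x) ^ (2*n) \<le> c ^ (2*n)" unfolding c_def
      by (rule cos_pow_far) (use \<delta>(1) d2 far in auto)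
    then have "cos (pi * x) ^ (2*n) * \<bar>f x\<bar> \<le> c ^ (2*n) * \<bar>f x\<bar>" by (rule mult_right_mono) simp
    moreover have "0 \<le> cos (pi * x) ^ (2*n)" by (simp add: power_mult)
    ultimately show ?thesis using sum0 unfolding h_def by (simp add: abs_mult)
  qed
  define A where "A = integral I (\<lambda>x. \<bar>f x\<bar>)"
  have Qb: "\<bar>Q n\<bar> \<le> c ^ (2*n) * A" for n
  proof -
    have si: "(\<lambda>x. \<Sum>m\<in>S. if x \<in> {m-\<delta>..m+\<delta>} then h n x else 0) integrable_on I"
      by (rule integrable_sum[OF finS indint])
    have "norm (Q n) \<le> integral I (\<lambda>x. c ^ (2*n) * \<bar>f x\<bar>)" unfolding Q_def
    proof (rule integral_norm_bound_integral)
      show "(\<lambda>x. h n x - (\<Sum>m\<in>S. if x \<in> {m-\<delta>..m+\<delta>} then h n x else 0)) integrable_on I"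
        by (rule integrable_diff[OF hint si])
      show "(\<lambda>x. c ^ (2*n) * \<bar>f x\<bar>) integrable_on I" by (rule integrable_on_mult_right[OF fabs])
    qed (use pw in simp)
    then show ?thesis unfolding A_def by simp
  qed
  have c1: "\<bar>c\<bar> < 1" unfolding c_def using \<delta>(1) d2 by (rule cos_lt1)
  have Q0: "(\<lambda>n. sqrt (real n * pi) * Q n) \<longlonglongrightarrow> 0"
  proof (rule Lim_null_comparison)
    show "(\<lambda>n. A * (sqrt (real n * pi) * c ^ (2*n))) \<longlonglongrightarrow> 0"
      by (rule tendsto_mult_right_zero[OF sqrt_geom_lim[OF c1]])
    show "\<forall>\<^sub>F n in sequentially. norm (sqrt (real n * pi) * Q n) \<le> A * (sqrt (real n * pi) * c ^ (2*n))"
    proof (intro always_eventually allI)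
      fix n
      have "sqrt (real n * pi) * \<bar>Q n\<bar> \<le> sqrt (real n * pi) * (c ^ (2*n) * A)"
        by (rule mult_left_mono[OF Qb]) simp
      then show "norm (sqrt (real n * pi) * Q n) \<le> A * (sqrt (real n * pi) * c ^ (2*n))"
        by (simp add: abs_mult mult_ac)
    qed
  qed
  define L where "L m = (if m = \<eta>1 then 0 else f m / 2) + (if m = \<eta>2 then 0 else f m / 2)" for m
  have Tlim: "(\<lambda>n. sqrt (real n * pi) * T n m) \<longlonglongrightarrow> L m" if m: "m \<in> S" for m
  proof -
    have l: "(\<lambda>n. sqrt (real n * pi) * integral {lo m..m} (h n)) \<longlonglongrightarrow> (if m = \<eta>1 then 0 else f m / 2)"
    proof (cases "m = \<eta>1")
      case True then show ?thesis by (simp add: lo_def)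
    next
      case False
      have "continuous_on {m-\<delta>..m} f"
        by (rule continuous_on_subset[OF contm[OF m]]) (use False lohi(2)[OF m] in \<open>auto simp: lo_def\<close>)
      from left_lim[OF SZ[OF m] \<delta>(1) d2 this] False show ?thesis by (simp add: lo_def hfun)
    qed
    have r: "(\<lambda>n. sqrt (real n * pi) * integral {m..hi m} (h n)) \<longlonglongrightarrow> (if m = \<eta>2 then 0 else f m / 2)"
    proof (cases "m = \<eta>2")
      case True then show ?thesis by (simp add: hi_def)
    next
      case False
      have "continuous_on {m..m+\<delta>} f"
        by (rule continuous_on_subset[OF contm[OF m]]) (use False lohi(1)[OF m] in \<open>auto simp: hi_def\<close>)
      from right_lim[OF SZ[OF m] \<delta>(1) d2 this] False show ?thesis by (simp add: hi_def hfun)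
    qed
    from tendsto_add[OF l r] show ?thesis unfolding T_def L_def by (simp add: distrib_left)
  qed
  have "(\<lambda>n. (\<Sum>m\<in>S. sqrt (real n * pi) * T n m) + sqrt (real n * pi) * Q n) \<longlonglongrightarrow> (\<Sum>m\<in>S. L m) + 0"
    by (intro tendsto_add tendsto_sum Tlim Q0)
  moreover have "(\<lambda>n. (\<Sum>m\<in>S. sqrt (real n * pi) * T n m) + sqrt (real n * pi) * Q n)
      = (\<lambda>n. sqrt (real n * pi) * integral {\<eta>1..\<eta>2} (\<lambda>x. (cos (pi * x)) ^ (2 * n) * f x))"
    by (rule ext) (simp add: decomp[unfolded I_def hfun] distrib_left sum_distrib_left I_def hfun)
  moreover have "(\<Sum>m\<in>S. L m) = (\<Sum>m\<in>S. f m) - (f \<eta>1 * indicator \<int> \<eta>1 + f \<eta>2 * indicator \<int> \<eta>2) / 2"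
  proof -
    have "L m = f m - (if m = \<eta>1 then f m / 2 else 0) - (if m = \<eta>2 then f m / 2 else 0)" for m
      unfolding L_def by auto
    then have "(\<Sum>m\<in>S. L m) = (\<Sum>m\<in>S. f m) - (\<Sum>m\<in>S. if m = \<eta>1 then f m / 2 else 0) - (\<Sum>m\<in>S. if m = \<eta>2 then f m / 2 else 0)"
      by (simp add: sum_subtractf)
    also have "\<dots> = (\<Sum>m\<in>S. f m) - (if \<eta>1 \<in> S then f \<eta>1 / 2 else 0) - (if \<eta>2 \<in> S then f \<eta>2 / 2 else 0)"
      using finS by (simp add: sum.delta')
    also have "\<eta>1 \<in> S \<longleftrightarrow> \<eta>1 \<in> \<int>" using le unfolding S_def by auto
    also have "\<eta>2 \<in> S \<longleftrightarrow> \<eta>2 \<in> \<int>" using le unfolding S_def by auto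
    finally show ?thesis by (simp add: indicator_def split: if_splits) (simp add: field_simps)
  qed
  ultimately show ?thesis unfolding S_def by simp
qed
end
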